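(* Let $\Phi:\{1,\dots,B\}\to\mathcal{A}=\{1,\dots,A\}$ and let $\Delta(\varepsilon)$ be a $B\times B$ stochastic matrix family normally parameterized by $\varepsilon\ge0$. Let $v=v(\varepsilon),\hat v=\hat v(\varepsilon):[0,\infty)\to W$ be mappings analytic at $\varepsilon=0$, and let $z_{-n}^0\in\mathcal{A}^{n+1}$ and $k\ge0$ be such that $\mathrm{ord}(p_v(z_{-n}^{-1}))\le k$ and $\mathrm{ord}(p_{\hat v}(z_{-n}^{-1}))\le k$. Then $b_{v,j}(z_{-n}^0)=b_{\hat v,j}(z_{-n}^0)$ for all $j$ with $0\le j\le n-4k-1$.
   Context: $W=\{w\in\mathbb{R}^B: w_i\ge0,\ \sum_i w_i=1\}$. For $a\in\mathcal{A}$, $\Delta_a$ is the $B\times B$ matrix with $\Delta_a(i,j)=\Delta(i,j)$ if $\Phi(j)=a$ and $0$ otherwise. $\Delta(\varepsilon)$ is normally parameterized if (i) each entry is analytic at $\varepsilon=0$, (ii) for $\varepsilon>0$, $\Delta(\varepsilon)$ is non-negative and irreducible, (iii) for every $a$, $\Delta_a(0)$ is the zero matrix or has rank one. For a mapping $v$ and a sequence $z_{-n}^0$, $p_v(z_{-n}^{-1})=v\Delta_{z_{-n}}\cdots\Delta_{z_{-1}}\mathbf{1}$, $p_v(z_{-n}^{0})=v\Delta_{z_{-n}}\cdots\Delta_{z_{0}}\mathbf{1}$, and $p_v(z_0\mid z_{-n}^{-1})=p_v(z_{-n}^0)/p_v(z_{-n}^{-1})$; $b_{v,j}(z_{-n}^0)$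 is the coefficient of $\varepsilon^j$ in the Taylor expansion of $p_v(z_0\mid z_{-n}^{-1})$ at $\varepsilon=0$. For $f$ analytic at $0$, $\mathrm{ord}(f)$ is the degree of the first nonzero term of its Taylor series at $0$. *)

theory Defs
  imports "HOL-Analysis.Analysis" "HOL-Library.Extended_Nat"
begin

definition has_taylor_at0 :: "(real \<Rightarrow> real) \<Rightarrow> (nat \<Rightarrow> real) \<Rightarrow> bool" where
  "has_taylor_at0 f c \<longleftrightarrow>
     (\<exists>r>0. \<forall>x. 0 < x \<and> x < r \<longrightarrow> (\<lambda>n. c n * x ^ n) sums f x)"

definition analytic_at0 :: "(real \<Rightarrow> real) \<Rightarrow> bool" where
  "analytic_at0 f \<longleftrightarrow>
     (\<exists>c. \<exists>r>0. \<forall>x. 0 \<le> x \<and> x < r \<longrightarrow> (\<lambda>n. c n * x ^ n) sums f x)"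

definition taylor_coeff :: "(real \<Rightarrow> real) \<Rightarrow> nat \<Rightarrow> real" where
  "taylor_coeff f j = (THE c. has_taylor_at0 f c) j"

definition ord0 :: "(real \<Rightarrow> real) \<Rightarrow> enat" where
  "ord0 f = (if \<exists>j. taylor_coeff f j \<noteq> 0
             then enat (LEAST j. taylor_coeff f j \<noteq> 0) else \<infinity>)"

definition matpow :: "real^'b^'b \<Rightarrow> nat \<Rightarrow> real^'b^'b" where
  "matpow M m = (((**) M) ^^ m) (mat 1)"

definition nonneg_mat :: "real^'b^'b \<Rightarrow> bool" where
  "nonneg_mat M \<longleftrightarrow> (\<forall>i j. M $ i $ j \<ge> 0)"

definition irreducible_mat :: "real^'b^'b \<Rightarrow> bool" where
  "irreducible_mat M \<longleftrightarrow> (\<forall>i j. \<exists>m. matpow M m $ i $ j > 0)"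

definition stochastic_mat :: "real^'b^'b \<Rightarrow> bool" where
  "stochastic_mat M \<longleftrightarrow> nonneg_mat M \<and> (\<forall>i. (\<Sum>j\<in>UNIV. M $ i $ j) = 1)"

definition prob_simplex :: "(real^'b) set" where
  "prob_simplex = {w. (\<forall>i. w $ i \<ge> 0) \<and> (\<Sum>i\<in>UNIV. w $ i) = 1}"

definition Delta_sub :: "('b \<Rightarrow> 'a) \<Rightarrow> real^'b^'b \<Rightarrow> 'a \<Rightarrow> real^'b^'b" where
  "Delta_sub \<Phi> M a = (\<chi> i j. if \<Phi> j = a then M $ i $ j else 0)"

definition normally_parameterized ::
  "('b::finite \<Rightarrow> 'a) \<Rightarrow> (real \<Rightarrow> real^'b^'b) \<Rightarrow> bool" where
  "normally_parameterized \<Phi> \<Delta> \<longleftrightarrow>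
     (\<forall>i j. analytic_at0 (\<lambda>\<epsilon>. \<Delta> \<epsilon> $ i $ j)) \<and>
     (\<forall>\<epsilon>>0. nonneg_mat (\<Delta> \<epsilon>) \<and> irreducible_mat (\<Delta> \<epsilon>)) \<and>
     (\<forall>a. Delta_sub \<Phi> (\<Delta> 0) a = 0 \<or> rank (Delta_sub \<Phi> (\<Delta> 0) a) = 1)"

definition pv :: "('b::finite \<Rightarrow> 'a) \<Rightarrow> (real \<Rightarrow> real^'b^'b) \<Rightarrow> (real \<Rightarrow> real^'b)
                   \<Rightarrow> 'a list \<Rightarrow> real \<Rightarrow> real" where
  "pv \<Phi> \<Delta> v zs \<epsilon> =
     (v \<epsilon> v* foldr (\<lambda>a M. Delta_sub \<Phi> (\<Delta> \<epsilon>) a ** M) zs (mat 1)) \<bullet> (\<chi> i. 1)"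

text \<open>The block z_{-n}^{-1} (as a list, oldest first) and z_{-n}^0.\<close>
definition past :: "(int \<Rightarrow> 'a) \<Rightarrow> nat \<Rightarrow> 'a list" where
  "past z n = map z [- int n..-1]"

definition block :: "(int \<Rightarrow> 'a) \<Rightarrow> nat \<Rightarrow> 'a list" where
  "block z n = map z [- int n..0]"

definition cond_pv where
  "cond_pv \<Phi> \<Delta> v z n = (\<lambda>\<epsilon>. pv \<Phi> \<Delta> v (block z n) \<epsilon> / pv \<Phi> \<Delta> v (past z n) \<epsilon>)"

definition bcoef where
  "bcoef \<Phi> \<Delta> v z n j = taylor_coeff (cond_pv \<Phi> \<Delta> v z n) j"

end

theory Submission
  imports Defs "HOL-Analysis.FPS_Convergence"
begin

definition rep :: "(real \<Rightarrow> real) \<Rightarrow> real fps \<Rightarrow> bool" where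
  "rep f F \<longleftrightarrow> 0 < fps_conv_radius F \<and> (\<forall>\<^sub>F x in at_right 0. f x = eval_fps F x)"

lemma ev_rad:
  assumes "0 < fps_conv_radius (F::real fps)"
  shows "\<forall>\<^sub>F x in at_right (0::real). 0 < x \<and> norm x < fps_conv_radius F"
proof -
  obtain r where r: "0 < ereal r" "ereal r < fps_conv_radius F"
    using ereal_dense2[OF assms] by blast
  have "0 < r" using r(1) by simp
  show ?thesis using eventually_at_right_real[OF \<open>0 < r\<close>]
  proof eventually_elim
    case (elim x)
    then have "ereal (norm x) < ereal r" by simp
    then have "ereal (norm x) < fps_conv_radius F" using r(2) by (rule order.strict_trans)
    then show ?case using elim by auto
  qed
qed

lemma eval_tendsto0:
  assumes "0 < fps_conv_radius (F::real fps)"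
  shows "(eval_fps F \<longlongrightarrow> fps_nth F 0) (at_right 0)"
proof -
  have "continuous (at (0::real) within {0<..}) (eval_fps F)"
    by (rule continuous_eval_fps) (use assms in \<open>simp add: zero_ereal_def\<close>)
  then show ?thesis by (simp add: continuous_within eval_fps_at_0)
qed

lemma rep_const: "rep (\<lambda>x. c) (fps_const c)"
  unfolding rep_def by simp

lemma rep_zero: "rep (\<lambda>x. 0) 0"
  unfolding rep_def by simp

lemma rep_one: "rep (\<lambda>x. 1) 1"
  unfolding rep_def by simp

lemma rep_add:
  assumes "rep f F" "rep g G"
  shows "rep (\<lambda>x. f x + g x) (F + G)"
proof -
  have r: "0 < fps_conv_radius (F + G)"
    using assms fps_conv_radius_add[of F G] unfolding rep_def
    by (meson min_less_iff_conj order_less_le_trans)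
  have "\<forall>\<^sub>F x in at_right 0. f x + g x = eval_fps (F + G) x"
  proof -
    have F: "0 < fps_conv_radius F" "\<forall>\<^sub>F x in at_right 0. f x = eval_fps F x"
      and G: "0 < fps_conv_radius G" "\<forall>\<^sub>F x in at_right 0. g x = eval_fps G x"
      using assms unfolding rep_def by auto
    show ?thesis using F(2) G(2) ev_rad[OF F(1)] ev_rad[OF G(1)]
    proof eventually_elim
      case (elim x) then show ?case by (auto simp add: eval_fps_add)
    qed
  qed
  then show ?thesis using r unfolding rep_def by blast
qed

lemma rep_mult:
  assumes "rep f F" "rep g G"
  shows "rep (\<lambda>x. f x * g x) (F * G)"
proof -
  have r: "0 < fps_conv_radius (F * G)"
    using assms fps_conv_radius_mult[of F G] unfolding rep_def
    by (meson min_less_iff_conj order_less_le_trans)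
  have "\<forall>\<^sub>F x in at_right 0. f x * g x = eval_fps (F * G) x"
  proof -
    have F: "0 < fps_conv_radius F" "\<forall>\<^sub>F x in at_right 0. f x = eval_fps F x"
      and G: "0 < fps_conv_radius G" "\<forall>\<^sub>F x in at_right 0. g x = eval_fps G x"
      using assms unfolding rep_def by auto
    show ?thesis using F(2) G(2) ev_rad[OF F(1)] ev_rad[OF G(1)]
    proof eventually_elim
      case (elim x) then show ?case by (auto simp add: eval_fps_mult)
    qed
  qed
  then show ?thesis using r unfolding rep_def by blast
qed

lemma rep_sum:
  assumes "finite S" "\<And>i. i \<in> S \<Longrightarrow> rep (f i) (F i)"
  shows "rep (\<lambda>x. \<Sum>i\<in>S. f i x) (\<Sum>i\<in>S. F i)"
  using assms
proof (induction S rule: finite_induct)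
  case empty
  then show ?case by (simp add: rep_zero)
next
  case (insert a S)
  then show ?case by (simp add: rep_add)
qed

lemma rep_cong: "rep f F \<Longrightarrow> (\<And>x. x > 0 \<Longrightarrow> f x = g x) \<Longrightarrow> rep g F"
proof -
  assume a: "rep f F" "\<And>x. x > 0 \<Longrightarrow> f x = g x"
  have "\<forall>\<^sub>F x in at_right 0. g x = eval_fps F x"
  proof -
    have "\<forall>\<^sub>F x in at_right 0. f x = eval_fps F x" using a(1) unfolding rep_def by auto
    then show ?thesis using eventually_at_right_less[of "0::real"]
  proof (eventually_elim)
    case (elim x) then show ?case using a(2) by simp
  qed
  qed
  then show ?thesis using a(1) unfolding rep_def by blast
qed

lemma rep_zero_fps:
  assumes "0 < fps_conv_radius (F::real fps)" "\<forall>\<^sub>F x in at_right 0. eval_fps F x = 0"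
  shows "F = 0"
proof (rule ccontr)
  assume F: "F \<noteq> 0"
  define d where "d = subdegree F"
  define G where "G = fps_shift d F"
  have G0: "fps_nth G 0 \<noteq> 0" using F by (simp add: G_def d_def)
  have "\<forall>\<^sub>F x in at_right 0. eval_fps G x = 0"
    using assms(2) ev_rad[OF assms(1)]
  proof (eventually_elim)
    case (elim x)
    then show ?case unfolding G_def d_def by (subst eval_fps_shift) auto
  qed
  then have "(eval_fps G \<longlongrightarrow> 0) (at_right 0)"
    using tendsto_eventually by (simp add: eventually_mono tendsto_eventually)
  moreover have "(eval_fps G \<longlongrightarrow> fps_nth G 0) (at_right 0)"
    by (rule eval_tendsto0) (simp add: G_def assms(1))
  ultimately have "fps_nth G 0 = 0"
    using tendsto_unique trivial_limit_at_right_real by blast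
  then show False using G0 by simp
qed

lemma rep_unique: "rep f F \<Longrightarrow> rep f G \<Longrightarrow> F = G"
proof -
  assume a: "rep f F" "rep f G"
  have r: "0 < fps_conv_radius (F - G)"
    using a fps_conv_radius_diff[of F G] unfolding rep_def
    by (meson min_less_iff_conj order_less_le_trans)
  have "\<forall>\<^sub>F x in at_right 0. eval_fps (F - G) x = 0"
  proof -
    have F: "0 < fps_conv_radius F" "\<forall>\<^sub>F x in at_right 0. f x = eval_fps F x"
      and G: "0 < fps_conv_radius G" "\<forall>\<^sub>F x in at_right 0. f x = eval_fps G x"
      using a unfolding rep_def by auto
    show ?thesis using F(2) G(2) ev_rad[OF F(1)] ev_rad[OF G(1)]
    proof eventually_elim
      case (elim x) then show ?case by (auto simp add: eval_fps_diff)
    qed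
  qed
  then have "F - G = 0" using rep_zero_fps r by blast
  then show ?thesis by simp
qed

lemma rep_taylor: "rep f F \<Longrightarrow> has_taylor_at0 f (fps_nth F)"
proof -
  assume a: "rep f F"
  then have "\<forall>\<^sub>F x in at_right 0. f x = eval_fps F x \<and> 0 < x \<and> norm x < fps_conv_radius F"
  proof -
    have "\<forall>\<^sub>F x in at_right 0. f x = eval_fps F x" "0 < fps_conv_radius F" using a unfolding rep_def by auto
    then show ?thesis using ev_rad[of F] by (auto intro: eventually_conj)
  qed
  then obtain b where b: "b > 0" "\<forall>y>0. y < b \<longrightarrow> f y = eval_fps F y \<and> 0 < y \<and> norm y < fps_conv_radius F"
    by (auto simp: eventually_at_right_field)
  show ?thesis unfolding has_taylor_at0_def
  proof (intro exI[of _ b] conjI allI impI)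
    fix x assume "0 < x \<and> x < b"
    then show "(\<lambda>n. fps_nth F n * x ^ n) sums f x" using b sums_eval_fps by metis
  qed (use b in auto)
qed

lemma taylor_rep: "has_taylor_at0 f c \<Longrightarrow> rep f (Abs_fps c)"
proof -
  assume "has_taylor_at0 f c"
  then obtain r where r: "r > 0" "\<forall>x. 0 < x \<and> x < r \<longrightarrow> (\<lambda>n. c n * x ^ n) sums f x"
    unfolding has_taylor_at0_def by blast
  have "(\<lambda>n. c n * (r/2) ^ n) sums f (r/2)" using r by auto
  then have "summable (\<lambda>n. c n * (r/2) ^ n)" by (rule sums_summable)
  then have "conv_radius c \<ge> norm (r/2)" by (rule conv_radius_geI)
  then have rad: "fps_conv_radius (Abs_fps c) > 0"
    using r(1) by (simp add: fps_conv_radius_def) (meson ereal_less(2) half_gt_zero order_less_le_trans)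
  have "\<forall>\<^sub>F x in at_right 0. x \<in> {0<..<r}" using r(1) by (rule eventually_at_right_real)
  then have "\<forall>\<^sub>F x in at_right 0. f x = eval_fps (Abs_fps c) x"
    by (rule eventually_mono) (use r in \<open>auto simp: eval_fps_def sums_iff\<close>)
  then show ?thesis using rad unfolding rep_def by blast
qed

lemma taylor_coeff_rep: "rep f F \<Longrightarrow> taylor_coeff f = fps_nth F"
proof -
  assume a: "rep f F"
  have "(THE c. has_taylor_at0 f c) = fps_nth F"
  proof (rule the_equality)
    show "has_taylor_at0 f (fps_nth F)" using a by (rule rep_taylor)
  next
    fix c assume "has_taylor_at0 f c"
    then have "rep f (Abs_fps c)" by (rule taylor_rep)
    then have "Abs_fps c = F" using a rep_unique by blast
    then show "c = fps_nth F" by auto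
  qed
  then show ?thesis unfolding taylor_coeff_def by (simp add: fun_eq_iff)
qed

lemma ord0_rep: "rep f F \<Longrightarrow> ord0 f = (if F = 0 then \<infinity> else enat (subdegree F))"
  by (auto simp: ord0_def taylor_coeff_rep subdegree_def fps_nonzero_nth)

lemma analytic_rep:
  assumes "analytic_at0 f"
  shows "\<exists>F. rep f F \<and> fps_nth F 0 = f 0"
proof -
  obtain c r where r: "r > 0" "\<forall>x. 0 \<le> x \<and> x < r \<longrightarrow> (\<lambda>n. c n * x ^ n) sums f x"
    using assms unfolding analytic_at0_def by blast
  have "has_taylor_at0 f c" unfolding has_taylor_at0_def using r by auto
  moreover have "c 0 = f 0" using r(2)[rule_format, of 0] r(1) by simp
  ultimately show ?thesis using taylor_rep by fastforce
qed

lemma order_le: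
  assumes N: "rep N FN" and D: "rep D FD"
    and pos: "\<forall>\<^sub>F x in at_right 0. 0 \<le> N x \<and> N x \<le> D x" and FN: "FN \<noteq> 0"
  shows "subdegree FD \<le> subdegree FN"
proof (rule ccontr)
  assume "\<not> subdegree FD \<le> subdegree FN"
  then have lt: "subdegree FN < subdegree FD" by simp
  define a where "a = subdegree FN"
  define G where "G = fps_shift a FN"
  define H where "H = fps_shift a FD"
  have rN: "0 < fps_conv_radius FN" "\<forall>\<^sub>F x in at_right 0. N x = eval_fps FN x"
    using N unfolding rep_def by auto
  have rD: "0 < fps_conv_radius FD" "\<forall>\<^sub>F x in at_right 0. D x = eval_fps FD x"
    using D unfolding rep_def by auto
  have ev: "\<forall>\<^sub>F x in at_right 0. 0 \<le> eval_fps G x \<and> eval_fps G x \<le> eval_fps H x"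
    using pos rN(2) rD(2) ev_rad[OF rN(1)] ev_rad[OF rD(1)]
  proof eventually_elim
    case (elim x)
    then have x: "0 < x" "norm x < fps_conv_radius FN" "norm x < fps_conv_radius FD"
      and e: "0 \<le> N x" "N x \<le> D x" "N x = eval_fps FN x" "D x = eval_fps FD x"
      by blast+
    have "eval_fps G x = eval_fps FN x / x ^ a"
      unfolding G_def a_def using x by (subst eval_fps_shift) simp_all
    moreover have "eval_fps H x = eval_fps FD x / x ^ a"
      unfolding H_def a_def using x lt by (subst eval_fps_shift) simp_all
    moreover have "x ^ a > 0" using x by simp
    ultimately show ?case using e by (simp add: divide_right_mono)
  qed
  have rG: "0 < fps_conv_radius G" using rN(1) unfolding G_def by simp
  have rH: "0 < fps_conv_radius H" using rD(1) unfolding H_def by simp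
  have G0: "fps_nth G 0 = fps_nth FN a" unfolding G_def fps_shift_nth by simp
  have H0: "fps_nth H 0 = 0" unfolding H_def a_def fps_shift_nth using nth_less_subdegree_zero[OF lt] by simp
  have tG: "(eval_fps G \<longlongrightarrow> fps_nth FN a) (at_right 0)"
    using eval_tendsto0[OF rG] unfolding G0 .
  have tH: "(eval_fps H \<longlongrightarrow> 0) (at_right 0)"
    using eval_tendsto0[OF rH] unfolding H0 .
  have "fps_nth FN a \<le> 0"
    by (rule tendsto_le[OF trivial_limit_at_right_real tH tG]) (use ev in \<open>eventually_elim, simp\<close>)
  moreover have "0 \<le> fps_nth FN a"
    by (rule tendsto_le[OF trivial_limit_at_right_real tG tendsto_const]) (use ev in \<open>eventually_elim, simp\<close>)
  ultimately have "fps_nth FN a = 0" by simp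
  then show False using FN by (simp add: a_def)
qed

lemma rep_div:
  assumes N: "rep N FN" and D: "rep D FD" and FD: "FD \<noteq> 0"
    and sd: "FN = 0 \<or> subdegree FD \<le> subdegree FN"
  defines "Q \<equiv> fps_shift (subdegree FD) FN * inverse (fps_shift (subdegree FD) FD)"
  shows "rep (\<lambda>x. N x / D x) Q \<and> FN = FD * Q"
proof -
  define d where "d = subdegree FD"
  define SN where "SN = fps_shift d FN"
  define SD where "SD = fps_shift d FD"
  have Q: "Q = SN * inverse SD" by (simp add: Q_def SN_def SD_def d_def)
  have SD0: "fps_nth SD 0 \<noteq> 0" using FD by (simp add: SD_def d_def)
  have eN: "FN = SN * fps_X ^ d"
    using sd by (auto simp: SN_def d_def fps_shift_times_fps_X_power)
  have eD: "FD = SD * fps_X ^ d"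
    by (simp add: SD_def d_def fps_shift_times_fps_X_power)
  have inv: "SD * inverse SD = 1" using SD0 by (rule inverse_mult_eq_1')
  have eq: "FN = FD * Q"
  proof -
    have "FD * Q = SN * fps_X ^ d * (SD * inverse SD)" by (simp add: eD Q algebra_simps)
    then show ?thesis using inv eN by simp
  qed
  have rN: "0 < fps_conv_radius FN" "\<forall>\<^sub>F x in at_right 0. N x = eval_fps FN x"
    using N unfolding rep_def by auto
  have rD: "0 < fps_conv_radius FD" "\<forall>\<^sub>F x in at_right 0. D x = eval_fps FD x"
    using D unfolding rep_def by auto
  have rSD: "0 < fps_conv_radius SD" using rD(1) by (simp add: SD_def)
  have rI: "0 < fps_conv_radius (inverse SD)" by (rule fps_conv_radius_inverse_pos[OF SD0 rSD])
  have rSN: "0 < fps_conv_radius SN" using rN(1) by (simp add: SN_def)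
  have rQ: "0 < fps_conv_radius Q"
    using fps_conv_radius_mult[of SN "inverse SD"] rI rSN unfolding Q
    by (meson min_less_iff_conj order_less_le_trans)
  have "\<forall>\<^sub>F x in at_right 0. eval_fps SD x \<noteq> 0"
    using eval_tendsto0[OF rSD] SD0 by (rule tendsto_imp_eventually_ne)
  then have "\<forall>\<^sub>F x in at_right 0. N x / D x = eval_fps Q x"
    using rN(2) rD(2) ev_rad[OF rD(1)] ev_rad[OF rQ]
  proof eventually_elim
    case (elim x)
    have "eval_fps SD x = eval_fps FD x / x ^ d"
      unfolding SD_def using elim by (subst eval_fps_shift) (auto simp: d_def)
    then have Dne: "eval_fps FD x \<noteq> 0" using elim by auto
    have "eval_fps FN x = eval_fps FD x * eval_fps Q x"
      using elim eq by (auto simp: eval_fps_mult)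
    then show ?case using elim Dne by simp
  qed
  then show ?thesis using rQ eq unfolding rep_def by auto
qed

definition vanish :: "nat \<Rightarrow> real fps \<Rightarrow> bool" where
  "vanish m f \<longleftrightarrow> (\<forall>i<m. fps_nth f i = 0)"

lemma vanish_0 [simp]: "vanish 0 f" by (simp add: vanish_def)
lemma vanish_zero [simp]: "vanish m 0" by (simp add: vanish_def)

lemma vanish_mult: "vanish a f \<Longrightarrow> vanish b g \<Longrightarrow> vanish (a + b) (f * g)"
  unfolding vanish_def fps_mult_nth
proof (intro allI impI sum.neutral ballI)
  fix i k assume a: "\<forall>i<a. fps_nth f i = 0" "\<forall>i<b. fps_nth g i = 0" "i < a + b" "k \<in> {0..i}"
  show "fps_nth f k * fps_nth g (i - k) = 0"
  proof (cases "k < a")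
    case True then show ?thesis using a by simp
  next
    case False then have "i - k < b" using a by auto
    then show ?thesis using a by simp
  qed
qed

lemma vanish_mult_left: "vanish b g \<Longrightarrow> vanish b (f * g)"
  using vanish_mult[of 0 f b g] by simp

lemma vanish_mult_right: "vanish b g \<Longrightarrow> vanish b (g * f)"
  using vanish_mult[of b g 0 f] by simp

lemma vanish_add: "vanish m f \<Longrightarrow> vanish m g \<Longrightarrow> vanish m (f + g)"
  by (simp add: vanish_def)

lemma vanish_diff: "vanish m f \<Longrightarrow> vanish m g \<Longrightarrow> vanish m (f - g)"
  by (simp add: vanish_def)

lemma vanish_sum: "finite S \<Longrightarrow> (\<And>i. i \<in> S \<Longrightarrow> vanish m (f i)) \<Longrightarrow> vanish m (\<Sum>i\<in>S. f i)"
  by (induction S rule: finite_induct) (auto intro: vanish_add)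

lemma vanish_half: "vanish m (2 * f) \<Longrightarrow> vanish m f"
  by (simp add: vanish_def)

lemma vanish_X: "fps_nth f 0 = 0 \<Longrightarrow> vanish 1 f"
  by (simp add: vanish_def)

lemma coeff_agree:
  fixes Nv Dv Nh Dh Qv Qh :: "real fps"
  assumes "Nv = Dv * Qv" "Nh = Dh * Qh" "Dv \<noteq> 0" "Dh \<noteq> 0"
    "subdegree Dv \<le> k" "subdegree Dh \<le> k" "vanish n (Nv * Dh - Nh * Dv)" "j + 2*k < n"
  shows "fps_nth Qv j = fps_nth Qh j"
proof (cases "Qv = Qh")
  case True then show ?thesis by simp
next
  case False
  define R where "R = Qv - Qh"
  have R: "R \<noteq> 0" using False by (simp add: R_def)
  have E: "Nv * Dh - Nh * Dv = Dv * Dh * R" using assms(1,2) by (simp add: R_def algebra_simps)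
  have Ene: "Dv * Dh * R \<noteq> 0" using R assms(3,4) by simp
  have sE: "subdegree (Dv * Dh * R) = subdegree Dv + subdegree Dh + subdegree R"
    using R assms(3,4) by simp
  have "n \<le> subdegree (Dv * Dh * R)"
  proof (rule ccontr)
    assume "\<not> n \<le> subdegree (Dv * Dh * R)"
    then have "fps_nth (Dv * Dh * R) (subdegree (Dv * Dh * R)) = 0"
      using assms(7) E by (simp add: vanish_def)
    then show False using Ene nth_subdegree_nonzero by blast
  qed
  then have "j < subdegree R" using sE assms(5,6,8) by linarith
  then have "fps_nth R j = 0" by (rule nth_less_subdegree_zero)
  then show ?thesis by (simp add: R_def)
qed

lemma cross_id:
  fixes x y :: "'i \<Rightarrow> 'r::comm_ring_1"
  shows "(\<Sum>p\<in>S. x p * P p k) * (\<Sum>q\<in>S. y q * P q l) - (\<Sum>p\<in>S. x p * P p l) * (\<Sum>q\<in>S. y q * P q k)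
       = (\<Sum>p\<in>S. \<Sum>q\<in>S. x p * y q * (P p k * P q l - P p l * P q k))"
  by (simp add: sum_product right_diff_distrib sum_subtractf mult_ac)

lemma cross_id2:
  fixes x y c :: "'i \<Rightarrow> 'r::comm_ring_1"
  shows "(\<Sum>k\<in>S. x k * c k) * (\<Sum>l\<in>S. y l) - (\<Sum>k\<in>S. y k * c k) * (\<Sum>l\<in>S. x l)
       = (\<Sum>k\<in>S. \<Sum>l\<in>S. c k * (x k * y l - x l * y k))"
proof -
  have "(\<Sum>k\<in>S. y k * c k) * (\<Sum>l\<in>S. x l) = (\<Sum>k\<in>S. \<Sum>l\<in>S. y k * c k * x l)"
    by (simp add: sum_product)
  also have "\<dots> = (\<Sum>k\<in>S. \<Sum>l\<in>S. c k * x l * y k)" by (simp add: mult_ac)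
  moreover have "(\<Sum>k\<in>S. x k * c k) * (\<Sum>l\<in>S. y l) = (\<Sum>k\<in>S. \<Sum>l\<in>S. c k * (x k * y l))"
    unfolding sum_product by (intro sum.cong refl) (simp add: mult_ac)
  moreover have "(\<Sum>k\<in>S. \<Sum>l\<in>S. c k * (x k * y l - x l * y k))
     = (\<Sum>k\<in>S. \<Sum>l\<in>S. c k * (x k * y l)) - (\<Sum>k\<in>S. \<Sum>l\<in>S. c k * (x l * y k))"
    by (simp only: right_diff_distrib sum_subtractf)
  moreover have "(\<Sum>k\<in>S. \<Sum>l\<in>S. c k * x l * y k) = (\<Sum>k\<in>S. \<Sum>l\<in>S. c k * (x l * y k))"
    by (simp only: mult.assoc)
  ultimately show ?thesis by simp
qed

definition fmul :: "('b::finite \<Rightarrow> 'b \<Rightarrow> real fps) \<Rightarrow> ('b \<Rightarrow> 'b \<Rightarrow> real fps) \<Rightarrow> 'b \<Rightarrow> 'b \<Rightarrow> real fps" where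
  "fmul A B i j = (\<Sum>k\<in>UNIV. A i k * B k j)"

definition fid :: "'b \<Rightarrow> 'b \<Rightarrow> real fps" where
  "fid i j = (if i = j then 1 else 0)"

definition minor :: "('b \<Rightarrow> 'b \<Rightarrow> real fps) \<Rightarrow> 'b \<Rightarrow> 'b \<Rightarrow> 'b \<Rightarrow> 'b \<Rightarrow> real fps" where
  "minor A i j k l = A i k * A j l - A i l * A j k"

lemma fmul_assoc: "fmul (fmul A B) C = fmul A (fmul B C)"
proof (intro ext)
  fix i j
  have "fmul (fmul A B) C i j = (\<Sum>k\<in>UNIV. \<Sum>p\<in>UNIV. A i p * B p k * C k j)"
    by (simp add: fmul_def sum_distrib_right)
  also have "\<dots> = (\<Sum>p\<in>UNIV. \<Sum>k\<in>UNIV. A i p * B p k * C k j)" by (rule sum.swap)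
  also have "\<dots> = fmul A (fmul B C) i j"
    by (simp add: fmul_def sum_distrib_left mult.assoc)
  finally show "fmul (fmul A B) C i j = fmul A (fmul B C) i j" .
qed

lemma fmul_fid: "fmul fid M = M"
proof (intro ext)
  fix i j
  have "(\<Sum>k\<in>UNIV. fid i k * M k j) = (\<Sum>k\<in>UNIV. if k = i then M k j else 0)"
    by (rule sum.cong) (auto simp: fid_def)
  then show "fmul fid M i j = M i j" by (simp add: fmul_def)
qed

lemma minor_fmul: "minor (fmul A B) i j k l = (\<Sum>p\<in>UNIV. \<Sum>q\<in>UNIV. A i p * A j q * minor B p q k l)"
  unfolding minor_def fmul_def by (rule cross_id)

lemma minor_fmul2:
  "2 * minor (fmul A B) i j k l = (\<Sum>p\<in>UNIV. \<Sum>q\<in>UNIV. minor A i j p q * minor B p q k l)"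
proof -
  define S where "S = (\<Sum>p\<in>UNIV. \<Sum>q\<in>UNIV. A i p * A j q * minor B p q k l)"
  have "S = (\<Sum>q\<in>UNIV. \<Sum>p\<in>UNIV. A i q * A j p * minor B q p k l)"
    unfolding S_def by (rule refl)
  also have "\<dots> = - (\<Sum>q\<in>UNIV. \<Sum>p\<in>UNIV. A i q * A j p * minor B p q k l)"
  proof -
    have "(\<Sum>q\<in>UNIV. \<Sum>p\<in>UNIV. A i q * A j p * minor B q p k l)
        = (\<Sum>q\<in>UNIV. \<Sum>p\<in>UNIV. - (A i q * A j p * minor B p q k l))"
      by (intro sum.cong refl) (simp only: minor_def, algebra)
    then show ?thesis by (simp only: sum_negf)
  qed
  also have "\<dots> = - (\<Sum>p\<in>UNIV. \<Sum>q\<in>UNIV. A i q * A j p * minor B p q k l)"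
    by (rule arg_cong[where f=uminus], rule sum.swap)
  finally have S2: "S = - (\<Sum>p\<in>UNIV. \<Sum>q\<in>UNIV. A i q * A j p * minor B p q k l)" .
  have "2 * minor (fmul A B) i j k l = S + S" by (simp only: minor_fmul S_def mult_2)
  also have "\<dots> = S - (\<Sum>p\<in>UNIV. \<Sum>q\<in>UNIV. A i q * A j p * minor B p q k l)"
    by (subst (2) S2) (simp only: diff_conv_add_uminus)
  also have "\<dots> = (\<Sum>p\<in>UNIV. \<Sum>q\<in>UNIV. minor A i j p q * minor B p q k l)"
    unfolding S_def by (simp only: minor_def[of A] left_diff_distrib sum_subtractf)
  finally show ?thesis .
qed

lemma vanish_minor_fmul:
  assumes "\<forall>i j k l. vanish a (minor A i j k l)" "\<forall>i j k l. vanish b (minor B i j k l)"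
  shows "vanish (a + b) (minor (fmul A B) i j k l)"
proof -
  have "vanish (a + b) (2 * minor (fmul A B) i j k l)"
    unfolding minor_fmul2 using assms
    by (intro vanish_sum vanish_mult) auto
  then show ?thesis by (rule vanish_half)
qed

lemma vanish_minor_fid: "vanish 0 (minor fid i j k l)" by simp

lemma rank1_minor:
  fixes M :: "real^'n^'m"
  assumes "rank M = 1"
  shows "M$i$k * M$j$l = M$i$l * M$j$k"
proof (rule ccontr)
  assume d: "M$i$k * M$j$l \<noteq> M$i$l * M$j$k"
  define r where "r = row i M"
  define s where "s = row j M"
  have s0: "s \<noteq> 0"
  proof
    assume "s = 0"
    then have "M$j$l = 0" "M$j$k = 0" unfolding s_def row_def by (metis vec_lambda_beta zero_index)+
    then show False using d by simp
  qed
  have rs: "r \<notin> span {s}"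
  proof
    assume "r \<in> span {s}"
    then obtain c where "r = c *\<^sub>R s" by (auto simp: span_singleton)
    then have "M$i$k = c * M$j$k" "M$i$l = c * M$j$l"
      unfolding r_def s_def row_def by (metis scaleR_vec_def vec_lambda_beta real_scaleR_def)+
    then show False using d by (simp add: algebra_simps)
  qed
  have iss: "independent {s}"
    by (rule independent_insertI) (use s0 in \<open>auto simp: independent_empty\<close>)
  have ind: "independent {r, s}"
    by (rule independent_insertI[OF rs iss])
  have "r \<noteq> s" using rs span_base[of s "{s}"] by auto
  then have "card {r, s} = 2" by simp
  moreover have "{r, s} \<subseteq> rows M" unfolding rows_def r_def s_def by auto
  then have "card {r, s} \<le> dim (rows M)" using ind by (rule independent_card_le_dim)
  ultimately show False using assms by (simp add: row_rank_def)
qed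

definition fpv :: "('b::finite \<Rightarrow> real fps) \<Rightarrow> ('b \<Rightarrow> 'b \<Rightarrow> real fps) \<Rightarrow> real fps" where
  "fpv V M = (\<Sum>j\<in>UNIV. \<Sum>i\<in>UNIV. V i * M i j)"

lemma fpv_fmul: "fpv V (fmul P C) = (\<Sum>k\<in>UNIV. (\<Sum>i\<in>UNIV. V i * P i k) * (\<Sum>j\<in>UNIV. C k j))"
proof -
  have "fpv V (fmul P C) = (\<Sum>j\<in>UNIV. \<Sum>i\<in>UNIV. \<Sum>k\<in>UNIV. V i * P i k * C k j)"
    unfolding fpv_def fmul_def by (intro sum.cong refl) (simp add: sum_distrib_left mult.assoc)
  also have "\<dots> = (\<Sum>j\<in>UNIV. \<Sum>k\<in>UNIV. \<Sum>i\<in>UNIV. V i * P i k * C k j)"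
    by (rule sum.cong[OF refl], rule sum.swap)
  also have "\<dots> = (\<Sum>k\<in>UNIV. \<Sum>j\<in>UNIV. \<Sum>i\<in>UNIV. V i * P i k * C k j)"
    by (rule sum.swap)
  also have "\<dots> = (\<Sum>k\<in>UNIV. (\<Sum>i\<in>UNIV. V i * P i k) * (\<Sum>j\<in>UNIV. C k j))"
    by (simp add: sum_distrib_left sum_distrib_right)
  finally show ?thesis .
qed

lemma fpv_alt: "fpv V P = (\<Sum>k\<in>UNIV. (\<Sum>i\<in>UNIV. V i * P i k))"
  by (simp add: fpv_def)

lemma cross_vanish:
  assumes "\<forall>i j k l. vanish m (minor P i j k l)"
  shows "vanish m (fpv V (fmul P C) * fpv W P - fpv W (fmul P C) * fpv V P)"
proof -
  define uV where "uV k = (\<Sum>i\<in>UNIV. V i * P i k)" for k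
  define uW where "uW k = (\<Sum>i\<in>UNIV. W i * P i k)" for k
  define c where "c k = (\<Sum>j\<in>UNIV. C k j)" for k
  have e: "fpv V (fmul P C) * fpv W P - fpv W (fmul P C) * fpv V P
      = (\<Sum>k\<in>UNIV. \<Sum>l\<in>UNIV. c k * (uV k * uW l - uV l * uW k))"
    unfolding fpv_fmul unfolding fpv_alt uV_def[symmetric] uW_def[symmetric] c_def[symmetric]
    by (rule cross_id2)
  have m: "uV k * uW l - uV l * uW k = (\<Sum>p\<in>UNIV. \<Sum>q\<in>UNIV. V p * W q * minor P p q k l)" for k l
    unfolding uV_def uW_def minor_def by (rule cross_id)
  show ?thesis unfolding e m using assms
    by (intro vanish_sum vanish_mult_left) auto
qed

definition PM :: "('a \<Rightarrow> 'b::finite \<Rightarrow> 'b \<Rightarrow> real fps) \<Rightarrow> 'a list \<Rightarrow> 'b \<Rightarrow> 'b \<Rightarrow> real fps" where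
  "PM E zs = foldr (\<lambda>a M. fmul (E a) M) zs fid"

lemma foldr_fmul: "foldr (\<lambda>a M. fmul (E a) M) zs M0 = fmul (PM E zs) M0"
proof (induction zs)
  case Nil
  show ?case unfolding PM_def by (simp add: fmul_fid)
next
  case (Cons a zs)
  have "foldr (\<lambda>a M. fmul (E a) M) (a # zs) M0 = fmul (E a) (fmul (PM E zs) M0)"
    using Cons by simp
  also have "\<dots> = fmul (fmul (E a) (PM E zs)) M0" by (simp only: fmul_assoc)
  also have "fmul (E a) (PM E zs) = PM E (a # zs)" by (simp add: PM_def)
  finally show ?case .
qed

lemma PM_append: "PM E (zs @ [a]) = fmul (PM E zs) (fmul (E a) fid)"
proof -
  have "PM E (zs @ [a]) = foldr (\<lambda>a M. fmul (E a) M) zs (fmul (E a) fid)" by (simp add: PM_def)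
  also have "\<dots> = fmul (PM E zs) (fmul (E a) fid)" by (rule foldr_fmul)
  finally show ?thesis .
qed

lemma minors_PM:
  assumes "\<forall>a i j k l. vanish 1 (minor (E a) i j k l)"
  shows "\<forall>i j k l. vanish (length zs) (minor (PM E zs) i j k l)"
proof (induction zs)
  case Nil then show ?case by simp
next
  case (Cons a zs)
  have "PM E (a # zs) = fmul (E a) (PM E zs)" by (simp add: PM_def)
  then show ?case using vanish_minor_fmul[of 1 "E a" "length zs" "PM E zs"] assms Cons by simp
qed

lemma sum3:
  fixes v :: "'i \<Rightarrow> 'r::comm_semiring_1"
  shows "(\<Sum>j\<in>S. \<Sum>i\<in>T. v i * (\<Sum>k\<in>U. M i k * X k j)) = (\<Sum>k\<in>U. (\<Sum>i\<in>T. v i * M i k) * (\<Sum>j\<in>S. X k j))"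
proof -
  have "(\<Sum>j\<in>S. \<Sum>i\<in>T. v i * (\<Sum>k\<in>U. M i k * X k j)) = (\<Sum>j\<in>S. \<Sum>i\<in>T. \<Sum>k\<in>U. v i * M i k * X k j)"
    by (intro sum.cong refl) (simp add: sum_distrib_left mult.assoc)
  also have "\<dots> = (\<Sum>j\<in>S. \<Sum>k\<in>U. \<Sum>i\<in>T. v i * M i k * X k j)"
    by (rule sum.cong[OF refl], rule sum.swap)
  also have "\<dots> = (\<Sum>k\<in>U. \<Sum>j\<in>S. \<Sum>i\<in>T. v i * M i k * X k j)"
    by (rule sum.swap)
  also have "\<dots> = (\<Sum>k\<in>U. (\<Sum>i\<in>T. v i * M i k) * (\<Sum>j\<in>S. X k j))"
    by (simp add: sum_distrib_left sum_distrib_right)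
  finally show ?thesis .
qed

definition PMf :: "('b::finite \<Rightarrow> 'a) \<Rightarrow> (real \<Rightarrow> real^'b^'b) \<Rightarrow> 'a list \<Rightarrow> real \<Rightarrow> real^'b^'b" where
  "PMf \<Phi> \<Delta> zs \<epsilon> = foldr (\<lambda>a M. Delta_sub \<Phi> (\<Delta> \<epsilon>) a ** M) zs (mat 1)"

lemma pv_alt: "pv \<Phi> \<Delta> v zs \<epsilon> = (\<Sum>j\<in>UNIV. \<Sum>i\<in>UNIV. v \<epsilon> $ i * PMf \<Phi> \<Delta> zs \<epsilon> $ i $ j)"
  by (simp add: pv_def PMf_def vector_matrix_mult_def inner_vec_def)

lemma mmult_entry: "(A ** B) $ i $ j = (\<Sum>k\<in>UNIV. A $ i $ k * B $ k $ j)"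
  by (simp add: matrix_matrix_mult_def)

lemma rep_PM:
  assumes "\<forall>a i j. rep (\<lambda>\<epsilon>. Delta_sub \<Phi> (\<Delta> \<epsilon>) a $ i $ j) (E a i j)"
  shows "rep (\<lambda>\<epsilon>. PMf \<Phi> \<Delta> zs \<epsilon> $ i $ j) (PM E zs i j)"
proof (induction zs arbitrary: i j)
  case Nil
  show ?case
  proof (cases "i = j")
    case True then show ?thesis by (simp add: PMf_def PM_def fid_def mat_def rep_one)
  next
    case False then show ?thesis by (simp add: PMf_def PM_def fid_def mat_def rep_zero)
  qed
next
  case (Cons a zs)
  have "rep (\<lambda>\<epsilon>. \<Sum>k\<in>UNIV. Delta_sub \<Phi> (\<Delta> \<epsilon>) a $ i $ k * PMf \<Phi> \<Delta> zs \<epsilon> $ k $ j)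
            (\<Sum>k\<in>UNIV. E a i k * PM E zs k j)"
    using assms Cons by (intro rep_sum rep_mult) auto
  then show ?case by (simp add: PMf_def PM_def fmul_def mmult_entry)
qed

lemma rep_pv:
  assumes "\<forall>a i j. rep (\<lambda>\<epsilon>. Delta_sub \<Phi> (\<Delta> \<epsilon>) a $ i $ j) (E a i j)"
    and "\<forall>i. rep (\<lambda>\<epsilon>. v \<epsilon> $ i) (V i)"
  shows "rep (pv \<Phi> \<Delta> v zs) (fpv V (PM E zs))"
proof -
  have "rep (\<lambda>\<epsilon>. \<Sum>j\<in>UNIV. \<Sum>i\<in>UNIV. v \<epsilon> $ i * PMf \<Phi> \<Delta> zs \<epsilon> $ i $ j) (fpv V (PM E zs))"
    unfolding fpv_def using assms rep_PM[OF assms(1)] by (intro rep_sum rep_mult) auto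
  then show ?thesis by (simp add: pv_alt[abs_def])
qed

lemma foldr_real: "foldr (\<lambda>a M. X a ** M) zs M0 = foldr (\<lambda>a M. X a ** M) zs (mat 1) ** (M0 :: real^'b^'b)"
  by (induction zs) (simp_all add: matrix_mul_assoc)

lemma nonneg_foldr:
  assumes "\<forall>a i j. 0 \<le> (X a :: real^'b::finite^'b) $ i $ j"
  shows "0 \<le> foldr (\<lambda>a M. X a ** M) zs (mat 1) $ i $ j"
proof (induction zs arbitrary: i j)
  case Nil then show ?case by (simp add: mat_def)
next
  case (Cons a zs) then show ?case using assms by (simp add: mmult_entry sum_nonneg)
qed

lemma pos_block:
  fixes \<Phi> :: "'b::finite \<Rightarrow> 'a"
  assumes st: "stochastic_mat (\<Delta> \<epsilon>)" and vW: "v \<epsilon> \<in> prob_simplex"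
  shows "0 \<le> pv \<Phi> \<Delta> v (zs @ [a]) \<epsilon> \<and> pv \<Phi> \<Delta> v (zs @ [a]) \<epsilon> \<le> pv \<Phi> \<Delta> v zs \<epsilon>"
proof -
  define X where "X = Delta_sub \<Phi> (\<Delta> \<epsilon>) a"
  define M where "M = PMf \<Phi> \<Delta> zs \<epsilon>"
  have Xnn: "\<forall>a i j. 0 \<le> Delta_sub \<Phi> (\<Delta> \<epsilon>) a $ i $ j"
    using st by (simp add: stochastic_mat_def nonneg_mat_def Delta_sub_def)
  have Mnn: "0 \<le> M $ i $ k" for i k
    unfolding M_def PMf_def by (rule nonneg_foldr[OF Xnn])
  have vnn: "0 \<le> v \<epsilon> $ i" for i using vW by (simp add: prob_simplex_def)
  have blk: "PMf \<Phi> \<Delta> (zs @ [a]) \<epsilon> = M ** X"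
  proof -
    have "PMf \<Phi> \<Delta> (zs @ [a]) \<epsilon> = foldr (\<lambda>a M. Delta_sub \<Phi> (\<Delta> \<epsilon>) a ** M) zs (X ** mat 1)"
      by (simp add: PMf_def X_def)
    also have "\<dots> = foldr (\<lambda>a M. Delta_sub \<Phi> (\<Delta> \<epsilon>) a ** M) zs (mat 1) ** (X ** mat 1)"
      by (rule foldr_real)
    finally show ?thesis by (simp add: M_def PMf_def)
  qed
  define w where "w k = (\<Sum>i\<in>UNIV. v \<epsilon> $ i * M $ i $ k)" for k
  have wnn: "0 \<le> w k" for k unfolding w_def using vnn Mnn by (intro sum_nonneg mult_nonneg_nonneg)
  have rs: "0 \<le> (\<Sum>j\<in>UNIV. X $ k $ j) \<and> (\<Sum>j\<in>UNIV. X $ k $ j) \<le> 1" for k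
  proof -
    have "(\<Sum>j\<in>UNIV. X $ k $ j) \<le> (\<Sum>j\<in>UNIV. \<Delta> \<epsilon> $ k $ j)"
      using st unfolding X_def Delta_sub_def stochastic_mat_def nonneg_mat_def
      by (intro sum_mono) auto
    also have "\<dots> = 1" using st by (simp add: stochastic_mat_def)
    finally show ?thesis using Xnn unfolding X_def by (auto intro: sum_nonneg)
  qed
  have e1: "pv \<Phi> \<Delta> v (zs @ [a]) \<epsilon> = (\<Sum>k\<in>UNIV. w k * (\<Sum>j\<in>UNIV. X $ k $ j))"
    unfolding pv_alt blk mmult_entry w_def
    by (rule sum3[where v="\<lambda>i. v \<epsilon> $ i" and M="\<lambda>i k. M $ i $ k" and X="\<lambda>k j. X $ k $ j"])
  have e2: "pv \<Phi> \<Delta> v zs \<epsilon> = (\<Sum>k\<in>UNIV. w k)"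
    unfolding pv_alt w_def M_def by simp
  have "0 \<le> (\<Sum>k\<in>UNIV. w k * (\<Sum>j\<in>UNIV. X $ k $ j))"
    by (rule sum_nonneg) (metis mult_nonneg_nonneg wnn rs)
  moreover have "(\<Sum>k\<in>UNIV. w k * (\<Sum>j\<in>UNIV. X $ k $ j)) \<le> (\<Sum>k\<in>UNIV. w k)"
    using wnn rs by (intro sum_mono) (simp add: mult_left_le)
  ultimately show ?thesis using e1 e2 by simp
qed

theorem lemma2p6:
  fixes \<Phi> :: "'b::finite \<Rightarrow> 'a::finite"
    and \<Delta> :: "real \<Rightarrow> real^'b^'b"
    and v vh :: "real \<Rightarrow> real^'b"
    and z :: "int \<Rightarrow> 'a"
    and n k :: nat
  assumes stoch: "\<forall>\<epsilon>\<ge>0. stochastic_mat (\<Delta> \<epsilon>)"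
    and normal: "normally_parameterized \<Phi> \<Delta>"
    and v_W: "\<forall>\<epsilon>\<ge>0. v \<epsilon> \<in> prob_simplex"
    and vh_W: "\<forall>\<epsilon>\<ge>0. vh \<epsilon> \<in> prob_simplex"
    and v_an: "\<forall>i. analytic_at0 (\<lambda>\<epsilon>. v \<epsilon> $ i)"
    and vh_an: "\<forall>i. analytic_at0 (\<lambda>\<epsilon>. vh \<epsilon> $ i)"
    and ord_v: "ord0 (pv \<Phi> \<Delta> v (past z n)) \<le> enat k"
    and ord_vh: "ord0 (pv \<Phi> \<Delta> vh (past z n)) \<le> enat k"
  shows "\<forall>j::nat. int j \<le> int n - 4 * int k - 1 \<longrightarrow>
           bcoef \<Phi> \<Delta> v z n j = bcoef \<Phi> \<Delta> vh z n j"
proof -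
  define Ps where "Ps = past z n"
  define a where "a = z 0"
  have blockeq: "block z n = Ps @ [a]"
    unfolding block_def past_def Ps_def a_def using upto_rec2[of "- int n" 0] by simp
  have lenPs: "length Ps = n" by (simp add: Ps_def past_def)
  have an: "\<forall>i j. analytic_at0 (\<lambda>\<epsilon>. \<Delta> \<epsilon> $ i $ j)"
    using normal unfolding normally_parameterized_def by blast
  define FD where "FD i j = (SOME F. rep (\<lambda>\<epsilon>. \<Delta> \<epsilon> $ i $ j) F \<and> fps_nth F 0 = \<Delta> 0 $ i $ j)" for i j
  have FD: "rep (\<lambda>\<epsilon>. \<Delta> \<epsilon> $ i $ j) (FD i j) \<and> fps_nth (FD i j) 0 = \<Delta> 0 $ i $ j" for i j
    unfolding FD_def using analytic_rep[OF an[rule_format, of i j]] by (rule someI_ex)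
  define V where "V i = (SOME F. rep (\<lambda>\<epsilon>. v \<epsilon> $ i) F \<and> fps_nth F 0 = v 0 $ i)" for i
  have V: "\<forall>i. rep (\<lambda>\<epsilon>. v \<epsilon> $ i) (V i)"
  proof
    fix i show "rep (\<lambda>\<epsilon>. v \<epsilon> $ i) (V i)"
      unfolding V_def using someI_ex[OF analytic_rep[OF v_an[rule_format, of i]]] by blast
  qed
  define Vh where "Vh i = (SOME F. rep (\<lambda>\<epsilon>. vh \<epsilon> $ i) F \<and> fps_nth F 0 = vh 0 $ i)" for i
  have Vh: "\<forall>i. rep (\<lambda>\<epsilon>. vh \<epsilon> $ i) (Vh i)"
  proof
    fix i show "rep (\<lambda>\<epsilon>. vh \<epsilon> $ i) (Vh i)"
      unfolding Vh_def using someI_ex[OF analytic_rep[OF vh_an[rule_format, of i]]] by blast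
  qed
  define E where "E a i j = (if \<Phi> j = a then FD i j else 0)" for a i j
  have repE: "\<forall>a i j. rep (\<lambda>\<epsilon>. Delta_sub \<Phi> (\<Delta> \<epsilon>) a $ i $ j) (E a i j)"
  proof (intro allI)
    fix a i j
    show "rep (\<lambda>\<epsilon>. Delta_sub \<Phi> (\<Delta> \<epsilon>) a $ i $ j) (E a i j)"
    proof (cases "\<Phi> j = a")
      case True then show ?thesis using FD[of i j] by (simp add: E_def Delta_sub_def)
    next
      case False then show ?thesis by (simp add: E_def Delta_sub_def rep_zero)
    qed
  qed
  have E0: "fps_nth (E a i j) 0 = Delta_sub \<Phi> (\<Delta> 0) a $ i $ j" for a i j
    using FD[of i j] by (simp add: E_def Delta_sub_def)
  have vanE: "\<forall>a i j k l. vanish 1 (minor (E a) i j k l)"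
  proof (intro allI vanish_X)
    fix a i j k l
    have rk: "Delta_sub \<Phi> (\<Delta> 0) a = 0 \<or> rank (Delta_sub \<Phi> (\<Delta> 0) a) = 1"
      using normal unfolding normally_parameterized_def by blast
    have "Delta_sub \<Phi> (\<Delta> 0) a $ i $ k * Delta_sub \<Phi> (\<Delta> 0) a $ j $ l
        = Delta_sub \<Phi> (\<Delta> 0) a $ i $ l * Delta_sub \<Phi> (\<Delta> 0) a $ j $ k"
      using rk
    proof
      assume "Delta_sub \<Phi> (\<Delta> 0) a = 0" then show ?thesis by simp
    next
      assume "rank (Delta_sub \<Phi> (\<Delta> 0) a) = 1" then show ?thesis by (rule rank1_minor)
    qed
    then show "fps_nth (minor (E a) i j k l) 0 = 0" by (simp add: minor_def E0)
  qed
  have minP: "\<forall>i j k l. vanish n (minor (PM E Ps) i j k l)"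
    using minors_PM[OF vanE, of Ps] lenPs by simp
  define Nv where "Nv = fpv V (PM E (Ps @ [a]))"
  define Dv where "Dv = fpv V (PM E Ps)"
  define Nh where "Nh = fpv Vh (PM E (Ps @ [a]))"
  define Dh where "Dh = fpv Vh (PM E Ps)"
  have rNv: "rep (pv \<Phi> \<Delta> v (Ps @ [a])) Nv" unfolding Nv_def by (rule rep_pv[OF repE V])
  have rDv: "rep (pv \<Phi> \<Delta> v Ps) Dv" unfolding Dv_def by (rule rep_pv[OF repE V])
  have rNh: "rep (pv \<Phi> \<Delta> vh (Ps @ [a])) Nh" unfolding Nh_def by (rule rep_pv[OF repE Vh])
  have rDh: "rep (pv \<Phi> \<Delta> vh Ps) Dh" unfolding Dh_def by (rule rep_pv[OF repE Vh])
  have cross: "vanish n (Nv * Dh - Nh * Dv)"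
    unfolding Nv_def Dh_def Nh_def Dv_def PM_append by (rule cross_vanish[OF minP])
  have oDv: "ord0 (pv \<Phi> \<Delta> v Ps) = (if Dv = 0 then \<infinity> else enat (subdegree Dv))"
    using rDv by (rule ord0_rep)
  have oDh: "ord0 (pv \<Phi> \<Delta> vh Ps) = (if Dh = 0 then \<infinity> else enat (subdegree Dh))"
    using rDh by (rule ord0_rep)
  have Dv0: "Dv \<noteq> 0" and sDv: "subdegree Dv \<le> k"
    using ord_v oDv unfolding Ps_def by (auto split: if_splits)
  have Dh0: "Dh \<noteq> 0" and sDh: "subdegree Dh \<le> k"
    using ord_vh oDh unfolding Ps_def by (auto split: if_splits)
  have posv: "\<forall>\<^sub>F x in at_right 0. 0 \<le> pv \<Phi> \<Delta> v (Ps @ [a]) x \<and> pv \<Phi> \<Delta> v (Ps @ [a]) x \<le> pv \<Phi> \<Delta> v Ps x"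
    using eventually_at_right_less[of "0::real"]
    by eventually_elim (rule pos_block, use stoch v_W in auto)
  have posh: "\<forall>\<^sub>F x in at_right 0. 0 \<le> pv \<Phi> \<Delta> vh (Ps @ [a]) x \<and> pv \<Phi> \<Delta> vh (Ps @ [a]) x \<le> pv \<Phi> \<Delta> vh Ps x"
    using eventually_at_right_less[of "0::real"]
    by eventually_elim (rule pos_block, use stoch vh_W in auto)
  have odv: "Nv = 0 \<or> subdegree Dv \<le> subdegree Nv"
    using order_le[OF rNv rDv posv] by blast
  have odh: "Nh = 0 \<or> subdegree Dh \<le> subdegree Nh"
    using order_le[OF rNh rDh posh] by blast
  obtain Qv where Qv: "rep (\<lambda>x. pv \<Phi> \<Delta> v (Ps @ [a]) x / pv \<Phi> \<Delta> v Ps x) Qv" "Nv = Dv * Qv"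
    using rep_div[OF rNv rDv Dv0 odv] by blast
  obtain Qh where Qh: "rep (\<lambda>x. pv \<Phi> \<Delta> vh (Ps @ [a]) x / pv \<Phi> \<Delta> vh Ps x) Qh" "Nh = Dh * Qh"
    using rep_div[OF rNh rDh Dh0 odh] by blast
  have bv: "bcoef \<Phi> \<Delta> v z n = fps_nth Qv"
    unfolding bcoef_def[abs_def] cond_pv_def blockeq Ps_def[symmetric]
    using taylor_coeff_rep[OF Qv(1)] by simp
  have bh: "bcoef \<Phi> \<Delta> vh z n = fps_nth Qh"
    unfolding bcoef_def[abs_def] cond_pv_def blockeq Ps_def[symmetric]
    using taylor_coeff_rep[OF Qh(1)] by simp
  show ?thesis
  proof (intro allI impI)
    fix j :: nat
    assume "int j \<le> int n - 4 * int k - 1"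
    then have "j + 2 * k < n" by linarith
    then have "fps_nth Qv j = fps_nth Qh j"
      using coeff_agree[OF Qv(2) Qh(2) Dv0 Dh0 sDv sDh cross] by blast
    then show "bcoef \<Phi> \<Delta> v z n j = bcoef \<Phi> \<Delta> vh z n j" using bv bh by simp
  qed
qed

end
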